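(* Let $G$ be a finite simple graph. If $x$ is a minimum cost construction sequence for $G$ (i.e. $\nu(x)=\nu_*(G)$), then $x$ is greedy.
   Context: For a finite simple graph $G=(V,E)$ with $\ell=|V|+|E|$, a construction sequence (c-sequence) is a bijection $x:\{1,\dots,\ell\}\to V\sqcup E$ such that every edge $e=uw$ satisfies $x^{-1}(e)>\max\{x^{-1}(u),x^{-1}(w)\}$. The cost of $x$ is $\nu(x)=\sum_{e=uw\in E}\big(2x^{-1}(e)-x^{-1}(u)-x^{-1}(w)\big)$, and $\nu_*(G)$ is the minimum of $\nu(x)$ over all c-sequences for $G$. A c-sequence $x$ is greedy if for every edge $e=uw$ and every vertex $v\notin\{u,w\}$, either $x^{-1}(v)<\max\{x^{-1}(u),x^{-1}(w)\}$ or $x^{-1}(v)>x^{-1}(e)$. *)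

theory Defs
  imports Main
begin

definition simple_graph :: "'a set \<Rightarrow> 'a set set \<Rightarrow> bool" where
  "simple_graph V E \<longleftrightarrow> finite V \<and>
     (\<forall>e\<in>E. \<exists>u w. u \<noteq> w \<and> u \<in> V \<and> w \<in> V \<and> e = {u, w})"

definition elems :: "'a set \<Rightarrow> 'a set set \<Rightarrow> ('a + 'a set) set" where
  "elems V E = Inl ` V \<union> Inr ` E"

definition pos :: "'a set \<Rightarrow> 'a set set \<Rightarrow> (nat \<Rightarrow> 'a + 'a set) \<Rightarrow> ('a + 'a set) \<Rightarrow> nat" where
  "pos V E x a = inv_into {1..card V + card E} x a"

definition cseq :: "'a set \<Rightarrow> 'a set set \<Rightarrow> (nat \<Rightarrow> 'a + 'a set) \<Rightarrow> bool" where
  "cseq V E x \<longleftrightarrow> bij_betw x {1..card V + card E} (elems V E) \<and>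
     (\<forall>e\<in>E. \<forall>u w. e = {u, w} \<longrightarrow>
        pos V E x (Inr e) > max (pos V E x (Inl u)) (pos V E x (Inl w)))"

definition cost :: "'a set \<Rightarrow> 'a set set \<Rightarrow> (nat \<Rightarrow> 'a + 'a set) \<Rightarrow> int" where
  "cost V E x = (\<Sum>e\<in>E. 2 * int (pos V E x (Inr e)) - (\<Sum>v\<in>e. int (pos V E x (Inl v))))"

definition nu_star :: "'a set \<Rightarrow> 'a set set \<Rightarrow> int" where
  "nu_star V E = Min {cost V E x | x. cseq V E x}"

definition greedy :: "'a set \<Rightarrow> 'a set set \<Rightarrow> (nat \<Rightarrow> 'a + 'a set) \<Rightarrow> bool" where
  "greedy V E x \<longleftrightarrow> (\<forall>e\<in>E. \<forall>u w. e = {u, w} \<longrightarrow> (\<forall>v\<in>V. v \<notin> {u, w} \<longrightarrow>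
      pos V E x (Inl v) < max (pos V E x (Inl u)) (pos V E x (Inl w)) \<or>
      pos V E x (Inl v) > pos V E x (Inr e)))"

end

theory Submission
  imports Defs
begin

lemma pos_in:
  assumes "cseq V E x" "a \<in> elems V E"
  shows "pos V E x a \<in> {1..card V + card E}" "x (pos V E x a) = a"
proof -
  have b: "bij_betw x {1..card V + card E} (elems V E)" using assms(1) cseq_def by blast
  hence "a \<in> x ` {1..card V + card E}" using assms(2) by (simp add: bij_betw_def)
  then show "pos V E x a \<in> {1..card V + card E}" "x (pos V E x a) = a"
    unfolding pos_def by (rule inv_into_into, rule f_inv_into_f)
qed

lemma pos_inj:
  assumes "cseq V E x" "a \<in> elems V E" "b \<in> elems V E" "pos V E x a = pos V E x b"
  shows "a = b"
  using pos_in[OF assms(1,2)] pos_in[OF assms(1,3)] assms(4) by metis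

lemma cost_bounds:
  assumes sg: "simple_graph V E" and c: "cseq V E z"
  shows "- int (card E * (2 * (card V + card E))) \<le> cost V E z \<and>
         cost V E z \<le> int (card E * (2 * (card V + card E)))"
proof -
  let ?n = "card V + card E"
  have trm: "- int (2 * ?n) \<le> 2 * int (pos V E z (Inr e)) - (\<Sum>v\<in>e. int (pos V E z (Inl v)))
        \<and> 2 * int (pos V E z (Inr e)) - (\<Sum>v\<in>e. int (pos V E z (Inl v))) \<le> int (2 * ?n)"
    if e: "e \<in> E" for e
  proof -
    obtain u w where uw: "u \<noteq> w" "u \<in> V" "w \<in> V" "e = {u,w}"
      using sg e unfolding simple_graph_def by blast
    have "Inr e \<in> elems V E" using e by (simp add: elems_def)
    hence pe: "pos V E z (Inr e) \<in> {1..?n}" using pos_in[OF c] by blast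
    have "Inl u \<in> elems V E" "Inl w \<in> elems V E" using uw by (auto simp: elems_def)
    hence "pos V E z (Inl u) \<in> {1..?n}" "pos V E z (Inl w) \<in> {1..?n}" using pos_in[OF c] by blast+
    moreover have "(\<Sum>v\<in>e. int (pos V E z (Inl v))) = int (pos V E z (Inl u)) + int (pos V E z (Inl w))"
      using uw by simp
    ultimately show ?thesis using pe by auto
  qed
  have "cost V E z \<le> (\<Sum>e\<in>E. int (2 * ?n))"
    unfolding cost_def by (rule sum_mono) (use trm in blast)
  moreover have "(\<Sum>e\<in>E. - int (2 * ?n)) \<le> cost V E z"
    unfolding cost_def by (rule sum_mono) (use trm in blast)
  ultimately show ?thesis by (simp only: sum_constant sum_negf of_nat_mult mult_minus_right)
qed

lemma finite_E:
  assumes "simple_graph V E" shows "finite V" "finite E"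
proof -
  show fv: "finite V" using assms unfolding simple_graph_def by blast
  have "E \<subseteq> Pow V" using assms unfolding simple_graph_def by fastforce
  thus "finite E" using fv finite_subset by blast
qed

lemma min_le:
  assumes sg: "simple_graph V E" and c: "cseq V E z"
  shows "nu_star V E \<le> cost V E z"
proof -
  let ?B = "int (card E * (2 * (card V + card E)))"
  have "{cost V E x | x. cseq V E x} \<subseteq> {-?B..?B}"
    using cost_bounds[OF sg] by fastforce
  hence "finite {cost V E x | x. cseq V E x}" using finite_subset by blast
  moreover have "cost V E z \<in> {cost V E x | x. cseq V E x}" using c by blast
  ultimately show ?thesis unfolding nu_star_def by simp
qed

theorem lemma1:
  fixes V :: "'a set" and E :: "'a set set" and x :: "nat \<Rightarrow> 'a + 'a set"
  assumes "simple_graph V E"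
    and "cseq V E x"
    and "cost V E x = nu_star V E"
  shows "greedy V E x"
proof (rule ccontr)
  assume ng: "\<not> greedy V E x"
  note sg = assms(1) and c = assms(2)
  let ?n = "card V + card E"
  let ?N = "{1..?n}"
  let ?p = "pos V E x"
  obtain e u w v where e: "e \<in> E" "e = {u,w}" and v: "v \<in> V" "v \<notin> {u,w}"
    and h1: "\<not> ?p (Inl v) < max (?p (Inl u)) (?p (Inl w))"
    and h2: "\<not> ?p (Inl v) > ?p (Inr e)"
    using ng unfolding greedy_def by blast
  have uwV: "u \<in> V" "w \<in> V" using sg e unfolding simple_graph_def by fastforce+
  have el: "Inl v \<in> elems V E" "Inl u \<in> elems V E" "Inl w \<in> elems V E" "Inr e \<in> elems V E"
    using e v uwV by (auto simp: elems_def)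
  have ne1: "?p (Inl v) \<noteq> ?p (Inl u)" using pos_inj[OF c el(1) el(2)] v by auto
  have ne2: "?p (Inl v) \<noteq> ?p (Inl w)" using pos_inj[OF c el(1) el(3)] v by auto
  have ne3: "?p (Inl v) \<noteq> ?p (Inr e)" using pos_inj[OF c el(1) el(4)] by auto
  have cse: "?p (Inr e) > max (?p (Inl u)) (?p (Inl w))" using c e unfolding cseq_def by blast
  define s where "s = ?p (Inl v)"
  define t where "t = ?p (Inr e)"
  have st: "s < t" using h2 ne3 unfolding s_def t_def by simp
  have us: "?p (Inl u) < s" "?p (Inl w) < s" using h1 ne1 ne2 unfolding s_def by auto
  have sN: "s \<in> ?N" and tN: "t \<in> ?N" using pos_in[OF c] el unfolding s_def t_def by blast+
  define \<tau> where "\<tau> i = (if i = t then s else if s \<le> i \<and> i < t then i+1 else i)" for i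
  define \<sigma> where "\<sigma> k = (if k = s then t else if s < k \<and> k \<le> t then k-1 else k)" for k
  have st1: "\<sigma> (\<tau> i) = i" for i using st unfolding \<sigma>_def \<tau>_def by auto
  have st2: "\<tau> (\<sigma> i) = i" for i using st unfolding \<sigma>_def \<tau>_def by auto
  have tauN: "\<tau> i \<in> ?N" if "i \<in> ?N" for i using that sN tN st unfolding \<tau>_def by auto
  have sigN: "\<sigma> i \<in> ?N" if "i \<in> ?N" for i using that sN tN st unfolding \<sigma>_def by auto
  have bs: "bij_betw \<sigma> ?N ?N"
    by (rule bij_betw_byWitness[where f'=\<tau>]) (use st1 st2 tauN sigN in auto)
  define y where "y = x \<circ> \<sigma>"
  have bx: "bij_betw x ?N (elems V E)" using c cseq_def by blast
  have by': "bij_betw y ?N (elems V E)" unfolding y_def using bij_betw_trans[OF bs bx] .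
  have posy: "pos V E y a = \<tau> (?p a)" if "a \<in> elems V E" for a
  proof -
    have "y (\<tau> (?p a)) = a" unfolding y_def using st1 pos_in(2)[OF c that] by simp
    moreover have "\<tau> (?p a) \<in> ?N" using tauN pos_in(1)[OF c that] by blast
    ultimately show ?thesis unfolding pos_def
      using by' bij_betw_def inv_into_f_eq by metis
  qed
  have tau_mono: "\<tau> i < \<tau> j" if "i < j" "i \<noteq> t" "j \<noteq> t" for i j
    using that unfolding \<tau>_def by auto
  have cy: "cseq V E y"
    unfolding cseq_def
  proof (intro conjI ballI allI impI)
    show "bij_betw y ?N (elems V E)" by (rule by')
    fix f a b assume f: "f \<in> E" "f = {a, b}"
    have abV: "a \<in> V" "b \<in> V" using sg f unfolding simple_graph_def by fastforce+
    have el2: "Inl a \<in> elems V E" "Inl b \<in> elems V E" "Inr f \<in> elems V E"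
      using f abV by (auto simp: elems_def)
    have cf: "?p (Inr f) > max (?p (Inl a)) (?p (Inl b))" using c f unfolding cseq_def by blast
    have at: "?p (Inl a) \<noteq> t" "?p (Inl b) \<noteq> t"
      using pos_inj[OF c el2(1) el(4)] pos_inj[OF c el2(2) el(4)] unfolding t_def by auto
    show "pos V E y (Inr f) > max (pos V E y (Inl a)) (pos V E y (Inl b))"
    proof (cases "f = e")
      case True
      hence "{a,b} = {u,w}" using f e by simp
      hence lt: "?p (Inl a) < s" "?p (Inl b) < s" using us by (auto simp: doubleton_eq_iff)
      have "pos V E y (Inr f) = s" using posy[OF el2(3)] True unfolding \<tau>_def t_def by simp
      moreover have "pos V E y (Inl a) = ?p (Inl a)" using posy[OF el2(1)] lt at unfolding \<tau>_def by simp
      moreover have "pos V E y (Inl b) = ?p (Inl b)" using posy[OF el2(2)] lt at unfolding \<tau>_def by simp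
      ultimately show ?thesis using lt by simp
    next
      case False
      have "?p (Inr f) \<noteq> t" using pos_inj[OF c el2(3) el(4)] False unfolding t_def by auto
      then show ?thesis using tau_mono cf at posy el2 by auto
    qed
  qed
  have vge: "pos V E y (Inl z) \<ge> ?p (Inl z)" if "z \<in> V" for z
  proof -
    have "Inl z \<in> elems V E" using that by (simp add: elems_def)
    moreover have "?p (Inl z) \<noteq> t" using pos_inj[OF c _ el(4)] calculation unfolding t_def by auto
    ultimately show ?thesis using posy unfolding \<tau>_def by auto
  qed
  have vgt: "pos V E y (Inl v) > ?p (Inl v)"
    using posy[OF el(1)] st unfolding \<tau>_def s_def by auto
  have fin: "finite V" "finite E" using finite_E[OF sg] by auto
  have total: "(\<Sum>a\<in>elems V E. pos V E z a) = (\<Sum>i\<in>?N. i)" if "cseq V E z" for z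
  proof -
    have "bij_betw z ?N (elems V E)" using that cseq_def by blast
    hence "bij_betw (pos V E z) (elems V E) ?N" unfolding pos_def by (rule bij_betw_inv_into)
    thus ?thesis by (rule sum.reindex_bij_betw)
  qed
  have split: "(\<Sum>a\<in>elems V E. pos V E z a) = (\<Sum>a\<in>V. pos V E z (Inl a)) + (\<Sum>a\<in>E. pos V E z (Inr a))" for z
  proof -
    have "(\<Sum>a\<in>elems V E. pos V E z a) = (\<Sum>a\<in>Inl ` V. pos V E z a) + (\<Sum>a\<in>Inr ` E. pos V E z a)"
      unfolding elems_def using fin by (intro sum.union_disjoint) auto
    also have "\<dots> = (\<Sum>a\<in>V. pos V E z (Inl a)) + (\<Sum>a\<in>E. pos V E z (Inr a))"
      by (simp add: sum.reindex)
    finally show ?thesis .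
  qed
  have sV: "(\<Sum>a\<in>V. ?p (Inl a)) < (\<Sum>a\<in>V. pos V E y (Inl a))"
    using fin(1) vge vgt v by (intro sum_strict_mono_ex1) auto
  have sE: "(\<Sum>a\<in>E. pos V E y (Inr a)) < (\<Sum>a\<in>E. ?p (Inr a))"
    using total[OF c] total[OF cy] split[of x] split[of y] sV by linarith
  have sE': "(\<Sum>a\<in>E. int (pos V E y (Inr a))) < (\<Sum>a\<in>E. int (?p (Inr a)))"
  proof -
    have "int (\<Sum>a\<in>E. pos V E y (Inr a)) < int (\<Sum>a\<in>E. ?p (Inr a))"
      using sE by (simp only: of_nat_less_iff)
    thus ?thesis by simp
  qed
  have dbl: "(\<Sum>f\<in>E. \<Sum>a\<in>f. int (?p (Inl a))) \<le> (\<Sum>f\<in>E. \<Sum>a\<in>f. int (pos V E y (Inl a)))"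
  proof (rule sum_mono, rule sum_mono)
    fix f a assume fa: "f \<in> E" "a \<in> f"
    obtain u' w' where "u' \<in> V" "w' \<in> V" "f = {u', w'}"
      using sg fa(1) unfolding simple_graph_def by blast
    hence "a \<in> V" using fa(2) by auto
    thus "int (?p (Inl a)) \<le> int (pos V E y (Inl a))" using vge by simp
  qed
  have ce: "cost V E z = 2 * (\<Sum>a\<in>E. int (pos V E z (Inr a))) - (\<Sum>f\<in>E. \<Sum>a\<in>f. int (pos V E z (Inl a)))" for z
    unfolding cost_def by (simp add: sum_subtractf sum_distrib_left)
  have "cost V E y < cost V E x" using ce[of x] ce[of y] sE' dbl by linarith
  moreover have "cost V E x \<le> cost V E y" using assms(3) min_le[OF sg cy] by simp
  ultimately show False by simp
qed

end
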